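(* Let $F$ be a field, $d\ge1$, and $x:\mathbb Z^2\to F$ such that $\det M^{(d+1)}_{j,k}=1$ and $\det M^{(d)}_{j,k}\neq0$ for all $j,k\in\mathbb Z$. Then there exist functions $d_1,\dots,d_d:\mathbb Z\to F$ such that for all $j,k\in\mathbb Z$, $$0=x_{j,k-d}+\sum_{i=1}^d(-1)^i\,d_i(j-k)\,x_{j-i,k+i-d}-(-1)^d\,x_{j-d-1,k+1}.$$ That is, the coefficients of this linear recursion depend only on $j-k$ and not on $j+k$.
   Context: For $m\ge1$, $M^{(m)}_{j,k}$ denotes the $m\times m$ matrix whose $(r,c)$ entry ($0\le r,c\le m-1$) is $x_{j-r+c,\;k-(m-1)+r+c}$. *)

theory Defs
  imports "Jordan_Normal_Form.Determinant"
begin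

definition Mmat :: "(int \<times> int \<Rightarrow> 'a::field) \<Rightarrow> nat \<Rightarrow> int \<Rightarrow> int \<Rightarrow> 'a mat" where
  "Mmat x m j k = mat m m (\<lambda>(r, c). x (j - int r + int c, k - (int m - 1) + int r + int c))"

end

theory Submission
  imports Defs
begin

lemma abstract_rel:
  fixes C :: "int \<Rightarrow> nat \<Rightarrow> 'a::field" and d :: nat
  assumes top: "\<And>c. det (mat (Suc d) (Suc d) (\<lambda>(i,j). C (c + int j) i)) = 1"
    and bot: "\<And>c. det (mat (Suc d) (Suc d) (\<lambda>(i,j). C (c + int j) (Suc i))) = 1"
    and inner: "\<And>c. det (mat d d (\<lambda>(i,j). C (c + int j) (Suc i))) \<noteq> 0"
  shows "\<exists>l. l 0 = 1 \<and> l (Suc d) = (-1)^(Suc d) \<and>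
           (\<forall>c. (\<Sum>r<Suc (Suc d). l r * C c r) = 0)"
proof -
  define Q where "Q c v = mat (Suc (Suc d)) (Suc (Suc d))
      (\<lambda>(r,t). if t < Suc d then C (c + int t) r else v r)" for c and v :: "nat \<Rightarrow> 'a"
  define phi where "phi c r = cofactor (Q c (\<lambda>_. 0)) r (Suc d)" for c r
  have Qc: "Q c v \<in> carrier_mat (Suc (Suc d)) (Suc (Suc d))" for c v
    unfolding Q_def by simp
  have L0: "mat_delete (Q c v) r (Suc d) =
      mat (Suc d) (Suc d) (\<lambda>(i,j). C (c + int j) (insert_index r i))" for c v r
    unfolding mat_delete_def Q_def insert_index_def
    by (rule eq_matI) auto
  have cof: "cofactor (Q c v) r (Suc d) = phi c r" for c v r
    unfolding phi_def cofactor_def L0 ..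
  have L1: "det (Q c v) = (\<Sum>r<Suc (Suc d). v r * phi c r)" for c v
  proof -
    have "det (Q c v) = (\<Sum>r<Suc (Suc d). Q c v $$ (r, Suc d) * cofactor (Q c v) r (Suc d))"
      by (rule laplace_expansion_column[OF Qc]) simp
    also have "\<dots> = (\<Sum>r<Suc (Suc d). v r * phi c r)"
    proof (rule sum.cong)
      fix r assume "r \<in> {..<Suc (Suc d)}"
      hence "Q c v $$ (r, Suc d) = v r" unfolding Q_def by simp
      then show "Q c v $$ (r, Suc d) * cofactor (Q c v) r (Suc d) = v r * phi c r"
        by (simp add: cof)
    qed simp
    finally show ?thesis .
  qed
  have L2: "(\<Sum>r<Suc (Suc d). C (c + int t) r * phi c r) = 0" if t: "t < Suc d" for c t
  proof -
    have "det (Q c (C (c + int t))) = 0"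
      by (rule det_identical_columns[OF Qc, of t "Suc d"]) (use t in \<open>auto simp: Q_def intro!: eq_vecI\<close>)
    then show ?thesis by (simp add: L1)
  qed
  have phiTop: "phi c (Suc d) = 1" for c
  proof -
    have "mat (Suc d) (Suc d) (\<lambda>(i,j). C (c + int j) (insert_index (Suc d) i))
        = mat (Suc d) (Suc d) (\<lambda>(i,j). C (c + int j) i)"
      by (rule eq_matI) auto
    then show ?thesis
      using top[of c] unfolding phi_def cofactor_def L0 by simp
  qed
  have phiBot: "phi c 0 = (-1)^(Suc d)" for c
  proof -
    have "mat (Suc d) (Suc d) (\<lambda>(i,j). C (c + int j) (insert_index 0 i))
        = mat (Suc d) (Suc d) (\<lambda>(i,j). C (c + int j) (Suc i))"
      by (rule eq_matI) auto
    then show ?thesis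
      using bot[of c] unfolding phi_def cofactor_def L0 by simp
  qed
  have L4: "\<forall>r<Suc (Suc d). mu r = 0"
    if m0: "mu 0 = 0" and mn: "mu (Suc d) = 0"
      and ann: "\<And>t. 1 \<le> t \<Longrightarrow> t \<le> d \<Longrightarrow> (\<Sum>r<Suc (Suc d). mu r * C (c + int t) r) = 0"
    for mu c
  proof -
    define N where "N = mat d d (\<lambda>(i,j). C (c + 1 + int j) (Suc i))"
    have Nc: "N \<in> carrier_mat d d" unfolding N_def by simp
    have "det (transpose_mat N) \<noteq> 0"
      using inner[of "c+1"] det_transpose[OF Nc] unfolding N_def by simp
    moreover have TNc: "transpose_mat N \<in> carrier_mat d d" using Nc by simp
    define w where "w = vec d (\<lambda>i. mu (Suc i))"
    have "transpose_mat N *\<^sub>v w = 0\<^sub>v d"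
    proof (rule eq_vecI)
      fix j assume j: "j < dim_vec (0\<^sub>v d :: 'a vec)"
      hence jd: "j < d" by simp
      have "(\<Sum>r<Suc (Suc d). mu r * C (c + int (Suc j)) r) = 0"
        using ann[of "Suc j"] jd by simp
      hence "(\<Sum>i<d. mu (Suc i) * C (c + int (Suc j)) (Suc i)) = 0"
        unfolding sum.lessThan_Suc[of _ "Suc d"] sum.lessThan_Suc_shift[of _ d]
        by (simp add: m0 mn del: sum.lessThan_Suc)
      moreover have "(transpose_mat N *\<^sub>v w) $ j = (\<Sum>i<d. mu (Suc i) * C (c + int (Suc j)) (Suc i))"
        using jd unfolding N_def w_def
        by (auto simp: scalar_prod_def lessThan_atLeast0 algebra_simps intro!: sum.cong)
      ultimately show "(transpose_mat N *\<^sub>v w) $ j = 0\<^sub>v d $ j" using jd by simp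
    qed (simp add: w_def N_def)
    moreover have "w \<in> carrier_vec d" unfolding w_def by simp
    ultimately have "w = 0\<^sub>v d"
      using det_0_iff_vec_prod_zero_field[OF TNc] \<open>w \<in> carrier_vec d\<close> by blast
    hence "\<forall>i<d. mu (Suc i) = 0"
      unfolding w_def by (metis index_vec index_zero_vec(1))
    then show ?thesis using m0 mn
      by (metis less_Suc_eq less_Suc_eq_0_disj)
  qed
  have step: "\<forall>r<Suc (Suc d). phi c r = phi (c+1) r" for c
  proof -
    have "\<forall>r<Suc (Suc d). phi c r - phi (c+1) r = 0"
    proof (rule L4[where c = c])
      fix t assume t: "1 \<le> t" "t \<le> d"
      have a: "(\<Sum>r<Suc (Suc d). C (c + int t) r * phi c r) = 0" using L2[of t c] t by simp
      have "(\<Sum>r<Suc (Suc d). C (c + 1 + int (t - 1)) r * phi (c+1) r) = 0"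
        using L2[of "t-1" "c+1"] t by simp
      moreover have "c + 1 + int (t - 1) = c + int t" using t by simp
      ultimately have b: "(\<Sum>r<Suc (Suc d). C (c + int t) r * phi (c+1) r) = 0" by simp
      show "(\<Sum>r<Suc (Suc d). (phi c r - phi (c+1) r) * C (c + int t) r) = 0"
        using a b by (simp add: algebra_simps sum_subtractf)
    qed (simp_all add: phiTop phiBot)
    then show ?thesis by simp
  qed
  have const: "\<forall>r<Suc (Suc d). phi c r = phi 0 r" for c
  proof (induction c rule: int_induct[where k = 0])
    case base then show ?case by simp
  next
    case (step1 i) then show ?case using step[of i] by simp
  next
    case (step2 i) then show ?case using step[of "i - 1"] by simp
  qed
  define l where "l r = (-1)^(Suc d) * phi 0 r" for r
  show ?thesis
  proof (intro exI conjI allI)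
    show "l 0 = 1" unfolding l_def phiBot by simp
    show "l (Suc d) = (-1)^(Suc d)" unfolding l_def phiTop by simp
    fix c
    have "(\<Sum>r<Suc (Suc d). C (c + int 0) r * phi c r) = 0" by (rule L2) simp
    hence "(\<Sum>r<Suc (Suc d). C c r * phi 0 r) = 0" using const[of c] by simp
    hence "(-1)^(Suc d) * (\<Sum>r<Suc (Suc d). C c r * phi 0 r) = 0" by simp
    then show "(\<Sum>r<Suc (Suc d). l r * C c r) = 0"
      unfolding l_def sum_distrib_left by (simp add: algebra_simps)
  qed
qed


lemma sum_split_ends:
  fixes f :: "nat \<Rightarrow> 'a::comm_monoid_add"
  shows "(\<Sum>r<Suc (Suc d). f r) = f 0 + (\<Sum>i = 1..d. f i) + f (Suc d)"
proof -
  have aux: "(\<Sum>i<n. f (Suc i)) = (\<Sum>i = 1..n. f i)" for n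
    by (induction n) (simp_all add: sum.cl_ivl_Suc)
  have "(\<Sum>r<Suc d. f r) = f 0 + (\<Sum>i = 1..d. f i)"
    unfolding sum.lessThan_Suc_shift aux ..
  then show ?thesis by simp
qed

theorem mainTheorem7:
  fixes x :: "int \<times> int \<Rightarrow> 'a::field" and d :: nat
  assumes "d \<ge> 1"
    and "\<forall>j k. det (Mmat x (d + 1) j k) = 1"
    and "\<forall>j k. det (Mmat x d j k) \<noteq> 0"
  shows "\<exists>dd :: nat \<Rightarrow> int \<Rightarrow> 'a. \<forall>j k.
           0 = x (j, k - int d)
             + (\<Sum>i = 1..d. (-1) ^ i * dd i (j - k) * x (j - int i, k + int i - int d))
             - (-1) ^ d * x (j - int d - 1, k + 1)"
proof -
  define C where "C g c r = x (c - int r, c - g - int d + int r)" for g c r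
  have ex: "\<exists>l. l 0 = 1 \<and> l (Suc d) = (-1)^(Suc d) \<and>
           (\<forall>c. (\<Sum>r<Suc (Suc d). l r * C g c r) = 0)" for g
  proof (rule abstract_rel)
    fix c
    have "mat (Suc d) (Suc d) (\<lambda>(i,j). C g (c + int j) i) = Mmat x (d+1) c (c - g)"
      unfolding Mmat_def C_def by (rule eq_matI) (auto simp: algebra_simps)
    then show "det (mat (Suc d) (Suc d) (\<lambda>(i,j). C g (c + int j) i)) = 1"
      using assms(2) by simp
    have "mat (Suc d) (Suc d) (\<lambda>(i,j). C g (c + int j) (Suc i)) = Mmat x (d+1) (c - 1) (c - g + 1)"
      unfolding Mmat_def C_def by (rule eq_matI) (auto simp: algebra_simps)
    then show "det (mat (Suc d) (Suc d) (\<lambda>(i,j). C g (c + int j) (Suc i))) = 1"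
      using assms(2) by simp
    have "mat d d (\<lambda>(i,j). C g (c + int j) (Suc i)) = Mmat x d (c - 1) (c - g)"
      unfolding Mmat_def C_def by (rule eq_matI) (auto simp: algebra_simps)
    then show "det (mat d d (\<lambda>(i,j). C g (c + int j) (Suc i))) \<noteq> 0"
      using assms(3) by simp
  qed
  then obtain L where L: "\<And>g. L g 0 = 1" "\<And>g. L g (Suc d) = (-1)^(Suc d)"
    "\<And>g c. (\<Sum>r<Suc (Suc d). L g r * C g c r) = 0"
    by metis
  define dd where "dd i g = (-1)^i * L g i" for i g
  show ?thesis
  proof (intro exI[where x=dd] allI)
    fix j k :: int
    define g where "g = j - k"
    have e1: "C g j 0 = x (j, k - int d)" unfolding C_def g_def by simp
    have e2: "C g j (Suc d) = x (j - int d - 1, k + 1)" unfolding C_def g_def by (simp add: diff_diff_eq add.commute)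
    have e3: "(\<Sum>i = 1..d. L g i * C g j i)
        = (\<Sum>i = 1..d. (-1) ^ i * dd i g * x (j - int i, k + int i - int d))"
    proof (rule sum.cong)
      fix i assume "i \<in> {1..d}"
      have "C g j i = x (j - int i, k + int i - int d)" unfolding C_def g_def by (simp add: diff_add_eq)
      then show "L g i * C g j i = (-1) ^ i * dd i g * x (j - int i, k + int i - int d)"
        unfolding dd_def by (simp add: mult.assoc[symmetric])
    qed simp
    have "0 = (\<Sum>r<Suc (Suc d). L g r * C g j r)" using L(3) by simp
    also have "\<dots> = L g 0 * C g j 0 + (\<Sum>i = 1..d. L g i * C g j i) + L g (Suc d) * C g j (Suc d)"
      by (rule sum_split_ends)
    also have "\<dots> = x (j, k - int d)
             + (\<Sum>i = 1..d. (-1) ^ i * dd i g * x (j - int i, k + int i - int d))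
             - (-1) ^ d * x (j - int d - 1, k + 1)"
      unfolding e1 e2 e3 L(1) L(2) by simp
    finally show "0 = x (j, k - int d)
             + (\<Sum>i = 1..d. (-1) ^ i * dd i (j - k) * x (j - int i, k + int i - int d))
             - (-1) ^ d * x (j - int d - 1, k + 1)" unfolding g_def .
  qed
qed

end
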